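(* For every integer $n\ge 5$ there exists an $(n^2,\lfloor n/2\rfloor)$-array that is not layerable.
   Context: $[n]=\{1,2,\dots,n\}$. For positive integers $n,d,k$, an $(n^d,k)$-array is a $d$-dimensional array of dimensions $n\times n\times\cdots\times n$ such that each entry is a subset of $[n]$ of cardinality exactly $k$, and every number in $[n]$ occurs in exactly $k$ of the entries along any axis-parallel line of the array (an axis-parallel line is the set of $n$ cells obtained by fixing all coordinates but one). A layer of an $(n^d,k)$-array is a choice of one element from the set in each cell such that each symbol of $[n]$ is chosen at most once (equivalently exactly once) along every axis-parallel line. The array is layerable if its entries can be partitioned into $k$ layers, i.e. there are $k$ layers such that every element of every cell's set is chosen in exactly one of them. *)

theory Defs
  imports Main
begin

definition cells :: "nat \<Rightarrow> nat \<Rightarrow> nat list set" where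
  "cells n d = {c. length c = d \<and> set c \<subseteq> {1..n}}"

text \<open>An (n^d,k)-array: each cell is a k-subset of [n], and every symbol of [n]
  occurs in exactly k entries along every axis-parallel line
  (the line through cell c in direction a consists of the cells c[a := t], t in [n]).\<close>
definition is_array :: "nat \<Rightarrow> nat \<Rightarrow> nat \<Rightarrow> (nat list \<Rightarrow> nat set) \<Rightarrow> bool" where
  "is_array n d k A \<longleftrightarrow>
     (\<forall>c\<in>cells n d. A c \<subseteq> {1..n} \<and> card (A c) = k) \<and>
     (\<forall>c\<in>cells n d. \<forall>a<d. \<forall>x\<in>{1..n}.
        card {t\<in>{1..n}. x \<in> A (c[a := t])} = k)"

definition is_layer :: "nat \<Rightarrow> nat \<Rightarrow> (nat list \<Rightarrow> nat set) \<Rightarrow> (nat list \<Rightarrow> nat) \<Rightarrow> bool" where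
  "is_layer n d A L \<longleftrightarrow>
     (\<forall>c\<in>cells n d. L c \<in> A c) \<and>
     (\<forall>c\<in>cells n d. \<forall>a<d. \<forall>t\<in>{1..n}. \<forall>t'\<in>{1..n}.
        t \<noteq> t' \<longrightarrow> L (c[a := t]) \<noteq> L (c[a := t']))"

definition layerable :: "nat \<Rightarrow> nat \<Rightarrow> nat \<Rightarrow> (nat list \<Rightarrow> nat set) \<Rightarrow> bool" where
  "layerable n d k A \<longleftrightarrow>
     (\<exists>Ls :: nat \<Rightarrow> nat list \<Rightarrow> nat.
        (\<forall>i<k. is_layer n d A (Ls i)) \<and>
        (\<forall>c\<in>cells n d. \<forall>x\<in>A c. \<exists>!i. i < k \<and> Ls i c = x))"

end

theory Submission
  imports Defs
begin


lemma cells2: "c \<in> cells n 2 \<longleftrightarrow> (\<exists>i j. c = [i,j] \<and> i \<in> {1..n} \<and> j \<in> {1..n})"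
proof
  assume "c \<in> cells n 2"
  then have l: "length c = 2" and s: "set c \<subseteq> {1..n}" by (auto simp: cells_def)
  from l obtain i j where "c = [i,j]"
    by (metis (no_types, lifting) One_nat_def length_0_conv length_Suc_conv numeral_2_eq_2)
  with s show "\<exists>i j. c = [i,j] \<and> i \<in> {1..n} \<and> j \<in> {1..n}" by auto
next
  assume "\<exists>i j. c = [i,j] \<and> i \<in> {1..n} \<and> j \<in> {1..n}"
  then show "c \<in> cells n 2" by (auto simp: cells_def)
qed

lemma array_of:
  assumes cel: "\<And>i j. i\<in>{1..n} \<Longrightarrow> j\<in>{1..n} \<Longrightarrow> F i j \<subseteq> {1..n} \<and> card (F i j) = k"
    and row: "\<And>i x. i\<in>{1..n} \<Longrightarrow> x\<in>{1..n} \<Longrightarrow> card {t\<in>{1..n}. x \<in> F i t} = k"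
    and col: "\<And>j x. j\<in>{1..n} \<Longrightarrow> x\<in>{1..n} \<Longrightarrow> card {t\<in>{1..n}. x \<in> F t j} = k"
  shows "is_array n 2 k (\<lambda>c. F (c!0) (c!1))"
  unfolding is_array_def
proof (intro conjI ballI allI impI)
  fix c assume "c \<in> cells n 2"
  then obtain i j where c: "c = [i,j]" "i \<in> {1..n}" "j \<in> {1..n}" by (auto simp: cells2)
  show "F (c!0) (c!1) \<subseteq> {1..n}" "card (F (c!0) (c!1)) = k" using cel c by auto
next
  fix c a x assume "c \<in> cells n 2" "a < (2::nat)" "x \<in> {1..n}"
  then obtain i j where c: "c = [i,j]" "i \<in> {1..n}" "j \<in> {1..n}" by (auto simp: cells2)
  have "a = 0 \<or> a = 1" using \<open>a < 2\<close> by auto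
  then show "card {t\<in>{1..n}. x \<in> F (c[a := t] ! 0) (c[a := t] ! 1)} = k"
  proof
    assume "a = 0" then show ?thesis using col[OF c(3) \<open>x\<in>_\<close>] c by simp
  next
    assume "a = 1" then show ?thesis using row[OF c(2) \<open>x\<in>_\<close>] c by simp
  qed
qed

lemma double_count:
  assumes "finite S" "finite U" "\<And>t. t\<in>S \<Longrightarrow> F t \<subseteq> U"
  shows "(\<Sum>x\<in>U. card {t\<in>S. x \<in> F t}) = (\<Sum>t\<in>S. card (F t))"
proof -
  have "(\<Sum>x\<in>U. card {t\<in>S. x \<in> F t}) = (\<Sum>x\<in>U. \<Sum>t\<in>S. if x \<in> F t then 1 else 0)"
    using assms(1) by (simp add: sum.inter_filter[symmetric])
  also have "\<dots> = (\<Sum>t\<in>S. \<Sum>x\<in>U. if x \<in> F t then 1 else 0)" by (rule sum.swap)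
  also have "\<dots> = (\<Sum>t\<in>S. card {x\<in>U. x \<in> F t})"
    using assms(2) by (simp add: sum.inter_filter[symmetric])
  also have "\<dots> = (\<Sum>t\<in>S. card (F t))"
  proof (rule sum.cong[OF refl])
    fix t assume "t \<in> S"
    then have "{x\<in>U. x \<in> F t} = F t" using assms(3) by auto
    then show "card {x\<in>U. x \<in> F t} = card (F t)" by simp
  qed
  finally show ?thesis .
qed

lemma all_eq_from_ge:
  fixes f :: "'a \<Rightarrow> nat"
  assumes "finite U" "sum f U = card U * k" "\<And>x. x\<in>U \<Longrightarrow> k \<le> f x" "x \<in> U"
  shows "f x = k"
proof (rule ccontr)
  assume "f x \<noteq> k"
  with assms(3,4) have "k < f x" by force
  then have "sum (\<lambda>_. k) U < sum f U"
    using assms by (intro sum_strict_mono_ex1) auto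
  then show False using assms(2) by simp
qed

lemma count_exact:
  assumes "\<And>t. t\<in>{1..n} \<Longrightarrow> G t \<subseteq> {1..n} \<and> card (G t) = (k::nat)"
    and "\<And>x. x\<in>{1..n} \<Longrightarrow> k \<le> card {t\<in>{1..n}. x \<in> G t}"
    and "x \<in> {1..(n::nat)}"
  shows "card {t\<in>{1..n}. x \<in> G t} = k"
proof -
  have "(\<Sum>x\<in>{1..n}. card {t\<in>{1..n}. x \<in> G t}) = (\<Sum>t\<in>{1..n}. card (G t))"
    by (rule double_count) (use assms(1) in auto)
  also have "\<dots> = card {1..n} * k" using assms(1) by simp
  finally show ?thesis using all_eq_from_ge[OF _ _ assms(2) assms(3)] by simp
qed

lemma card_ge_minus_one:
  assumes "finite S" "\<And>x y. x\<in>S \<Longrightarrow> y\<in>S \<Longrightarrow> \<not> P x \<Longrightarrow> \<not> P y \<Longrightarrow> x = y"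
  shows "card S - 1 \<le> card {x\<in>S. P x}"
proof -
  have "card {x\<in>S. \<not> P x} \<le> 1" using assms(2) by (auto simp: card_le_Suc0_iff_eq assms(1))
  moreover have "card S = card {x\<in>S. P x} + card {x\<in>S. \<not> P x}"
    using assms(1) by (subst card_Un_disjoint[symmetric]) (auto intro: arg_cong[where f=card])
  ultimately show ?thesis by linarith
qed

lemma card_split:
  assumes "m \<le> n"
  shows "card {t\<in>{1..n::nat}. P t} = card {t\<in>{1..m}. P t} + card {t\<in>{m+1..n}. P t}"
proof -
  have "{t\<in>{1..n}. P t} = {t\<in>{1..m}. P t} \<union> {t\<in>{m+1..n}. P t}" using assms by auto
  then show ?thesis by (simp add: card_Un_disjoint[symmetric] disjoint_iff)
qed

lemma layer_row_bij:
  assumes L: "is_layer n 2 A L" and sub: "\<forall>c\<in>cells n 2. A c \<subseteq> {1..n}" and i: "i \<in> {1..n}"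
  shows "(\<lambda>j. L [i,j]) ` {1..n} = {1..n}" "inj_on (\<lambda>j. L [i,j]) {1..n}"
proof -
  have c: "[i,1] \<in> cells n 2" using i by (auto simp: cells_def)
  show inj: "inj_on (\<lambda>j. L [i,j]) {1..n}"
    using L c unfolding is_layer_def inj_on_def by (metis One_nat_def list_update_code(2,3) lessI numeral_2_eq_2)
  have "(\<lambda>j. L [i,j]) ` {1..n} \<subseteq> {1..n}"
  proof
    fix y assume "y \<in> (\<lambda>j. L [i,j]) ` {1..n}"
    then obtain j where j: "j \<in> {1..n}" "y = L [i,j]" by auto
    have "[i,j] \<in> cells n 2" using i j by (auto simp: cells_def)
    then have "L [i,j] \<in> A [i,j]" "A [i,j] \<subseteq> {1..n}" using L sub unfolding is_layer_def by auto
    then show "y \<in> {1..n}" using \<open>y = L [i,j]\<close> by blast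
  qed
  then show "(\<lambda>j. L [i,j]) ` {1..n} = {1..n}" using endo_inj_surj inj by blast
qed

lemma layer_col_bij:
  assumes L: "is_layer n 2 A L" and sub: "\<forall>c\<in>cells n 2. A c \<subseteq> {1..n}" and j: "j \<in> {1..n}"
  shows "(\<lambda>i. L [i,j]) ` {1..n} = {1..n}" "inj_on (\<lambda>i. L [i,j]) {1..n}"
proof -
  have c: "[1,j] \<in> cells n 2" using j by (auto simp: cells_def)
  show inj: "inj_on (\<lambda>i. L [i,j]) {1..n}"
    using L c unfolding is_layer_def inj_on_def by (metis list_update_code(2) zero_less_numeral)
  have "(\<lambda>i. L [i,j]) ` {1..n} \<subseteq> {1..n}"
  proof
    fix y assume "y \<in> (\<lambda>i. L [i,j]) ` {1..n}"
    then obtain i where i: "i \<in> {1..n}" "y = L [i,j]" by auto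
    have "[i,j] \<in> cells n 2" using i j by (auto simp: cells_def)
    then have "L [i,j] \<in> A [i,j]" "A [i,j] \<subseteq> {1..n}" using L sub unfolding is_layer_def by auto
    then show "y \<in> {1..n}" using \<open>y = L [i,j]\<close> by blast
  qed
  then show "(\<lambda>i. L [i,j]) ` {1..n} = {1..n}" using endo_inj_surj inj by blast
qed

lemma sum_bij_reindex:
  assumes "f ` S = S" "inj_on f S"
  shows "(\<Sum>j\<in>S. g (f j)) = (\<Sum>x\<in>S. g x)"
  using sum.reindex[OF assms(2), of g] assms(1) by simp

lemma no_layer:
  fixes a b c :: "nat \<Rightarrow> nat \<Rightarrow> int"
  assumes sub: "\<forall>c\<in>cells n 2. A c \<subseteq> {1..n}"
    and dv: "\<And>i j x. i\<in>{1..n} \<Longrightarrow> j\<in>{1..n} \<Longrightarrow> x \<in> A [i,j] \<Longrightarrow> k dvd (a i x + b j x + c i j)"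
    and nd: "\<not> k dvd ((\<Sum>i\<in>{1..n}. \<Sum>x\<in>{1..n}. a i x) + (\<Sum>j\<in>{1..n}. \<Sum>x\<in>{1..n}. b j x)
               + (\<Sum>i\<in>{1..n}. \<Sum>j\<in>{1..n}. c i j))"
  shows "\<not> is_layer n 2 A L"
proof
  assume L: "is_layer n 2 A L"
  have inA: "L [i,j] \<in> A [i,j]" if "i\<in>{1..n}" "j\<in>{1..n}" for i j
    using L that unfolding is_layer_def by (auto simp: cells2)
  have "k dvd (\<Sum>i\<in>{1..n}. \<Sum>j\<in>{1..n}. a i (L[i,j]) + b j (L[i,j]) + c i j)"
    using dv inA by (intro dvd_sum) auto
  also have "(\<Sum>i\<in>{1..n}. \<Sum>j\<in>{1..n}. a i (L[i,j]) + b j (L[i,j]) + c i j)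
     = (\<Sum>i\<in>{1..n}. \<Sum>j\<in>{1..n}. a i (L[i,j])) + (\<Sum>i\<in>{1..n}. \<Sum>j\<in>{1..n}. b j (L[i,j]))
       + (\<Sum>i\<in>{1..n}. \<Sum>j\<in>{1..n}. c i j)"
    by (simp add: sum.distrib)
  also have "(\<Sum>i\<in>{1..n}. \<Sum>j\<in>{1..n}. a i (L[i,j])) = (\<Sum>i\<in>{1..n}. \<Sum>x\<in>{1..n}. a i x)"
    using layer_row_bij[OF L sub] by (intro sum.cong refl sum_bij_reindex) auto
  also have "(\<Sum>i\<in>{1..n}. \<Sum>j\<in>{1..n}. b j (L[i,j])) = (\<Sum>j\<in>{1..n}. \<Sum>i\<in>{1..n}. b j (L[i,j]))"
    by (rule sum.swap)
  also have "\<dots> = (\<Sum>j\<in>{1..n}. \<Sum>x\<in>{1..n}. b j x)"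
    using layer_col_bij[OF L sub] by (intro sum.cong refl sum_bij_reindex) auto
  finally show False using nd by simp
qed

lemma not_layerable:
  assumes "0 < k" "\<And>L. \<not> is_layer n 2 A L"
  shows "\<not> layerable n 2 k A"
  using assms unfolding layerable_def by blast



definition zz :: "nat \<Rightarrow> nat \<Rightarrow> nat" where
  "zz k j = (if j = 2*k+1 then k else if j = 2*k then 0 else j - k)"
definition nuo :: "nat \<Rightarrow> nat \<Rightarrow> nat \<Rightarrow> nat" where
  "nuo k i j = (if zz k j + i \<le> k then zz k j + i + k + 1 else zz k j + i)"
definition sucT :: "nat \<Rightarrow> nat \<Rightarrow> nat" where
  "sucT k i = (if i = 2*k+1 then k+1 else i+1)"
definition own :: "nat \<Rightarrow> nat \<Rightarrow> nat" where
  "own k i = (if i = 2*k+1 then 2*k else 2*k+1)"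
definition tau :: "nat \<Rightarrow> nat \<Rightarrow> nat \<Rightarrow> nat" where
  "tau k i j = (if i < j then j - i else j + k + 1 - i)"
definition Fo :: "nat \<Rightarrow> nat \<Rightarrow> nat \<Rightarrow> nat set" where
  "Fo k i j = (if i \<le> k then (if j \<le> k then {1..k} else {k+1..2*k+1} - {nuo k i j})
     else if j \<le> k then {k+1..2*k+1} - {if j = 1 then i else sucT k i}
     else if i = j then {1..k}
     else insert (if j = own k i then i else sucT k i) ({1..k} - {tau k i j}))"

lemma nuo_range: "1 \<le> i \<Longrightarrow> i \<le> k \<Longrightarrow> k+1 \<le> j \<Longrightarrow> j \<le> 2*k+1 \<Longrightarrow> nuo k i j \<in> {k+1..2*k+1}"
  unfolding nuo_def zz_def by auto

lemma nuo_inj_t: "1 \<le> i \<Longrightarrow> i \<le> k \<Longrightarrow> t1 \<in> {k+1..2*k+1} \<Longrightarrow> t2 \<in> {k+1..2*k+1}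
   \<Longrightarrow> nuo k i t1 = nuo k i t2 \<Longrightarrow> t1 = t2"
  unfolding nuo_def zz_def by (auto split: if_splits)

lemma nuo_inj_i: "i1 \<in> {1..k} \<Longrightarrow> i2 \<in> {1..k} \<Longrightarrow> j \<in> {k+1..2*k+1}
   \<Longrightarrow> nuo k i1 j = nuo k i2 j \<Longrightarrow> i1 = i2"
  unfolding nuo_def zz_def by (auto split: if_splits)

lemma nuo_miss: "i \<in> {1..k} \<Longrightarrow> j \<in> {k+1..2*k+1} \<Longrightarrow> nuo k i j \<noteq> k + 1 + zz k j"
  unfolding nuo_def zz_def by (auto split: if_splits)

lemma sucT_range: "1 \<le> k \<Longrightarrow> i \<in> {k+1..2*k+1} \<Longrightarrow> sucT k i \<in> {k+1..2*k+1}"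
  unfolding sucT_def by auto
lemma sucT_ne: "1 \<le> k \<Longrightarrow> sucT k i \<noteq> i" unfolding sucT_def by auto
lemma sucT_inj: "i1 \<in> {k+1..2*k+1} \<Longrightarrow> i2 \<in> {k+1..2*k+1} \<Longrightarrow> sucT k i1 = sucT k i2 \<Longrightarrow> i1 = i2"
  unfolding sucT_def by (auto split: if_splits)

lemma own_range: "1 \<le> k \<Longrightarrow> own k i \<in> {k+1..2*k+1}" unfolding own_def by auto
lemma own_ne: "1 \<le> k \<Longrightarrow> own k i \<noteq> i" unfolding own_def by auto

lemma tau_range: "i \<in> {k+1..2*k+1} \<Longrightarrow> j \<in> {k+1..2*k+1} \<Longrightarrow> i \<noteq> j \<Longrightarrow> tau k i j \<in> {1..k}"
  unfolding tau_def by auto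
lemma tau_inj_t: "i \<in> {k+1..2*k+1} \<Longrightarrow> t1 \<in> {k+1..2*k+1} \<Longrightarrow> t2 \<in> {k+1..2*k+1}
   \<Longrightarrow> t1 \<noteq> i \<Longrightarrow> t2 \<noteq> i \<Longrightarrow> tau k i t1 = tau k i t2 \<Longrightarrow> t1 = t2"
  unfolding tau_def by (auto split: if_splits)
lemma tau_inj_i: "j \<in> {k+1..2*k+1} \<Longrightarrow> i1 \<in> {k+1..2*k+1} \<Longrightarrow> i2 \<in> {k+1..2*k+1}
   \<Longrightarrow> i1 \<noteq> j \<Longrightarrow> i2 \<noteq> j \<Longrightarrow> tau k i1 j = tau k i2 j \<Longrightarrow> i1 = i2"
  unfolding tau_def by (auto split: if_splits)

lemma Fo_RC: "i \<le> k \<Longrightarrow> j \<le> k \<Longrightarrow> Fo k i j = {1..k}" by (simp add: Fo_def)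
lemma Fo_RC': "i \<le> k \<Longrightarrow> \<not> j \<le> k \<Longrightarrow> Fo k i j = {k+1..2*k+1} - {nuo k i j}" by (simp add: Fo_def)
lemma Fo_R'C: "\<not> i \<le> k \<Longrightarrow> j \<le> k \<Longrightarrow> Fo k i j = {k+1..2*k+1} - {if j = 1 then i else sucT k i}"
  by (simp add: Fo_def)
lemma Fo_diag: "\<not> i \<le> k \<Longrightarrow> Fo k i i = {1..k}" by (simp add: Fo_def)
lemma Fo_off: "\<not> i \<le> k \<Longrightarrow> \<not> j \<le> k \<Longrightarrow> i \<noteq> j \<Longrightarrow>
   Fo k i j = insert (if j = own k i then i else sucT k i) ({1..k} - {tau k i j})" by (simp add: Fo_def)

lemma Fo_cell:
  assumes k: "2 \<le> k" and i: "i \<in> {1..2*k+1}" and j: "j \<in> {1..2*k+1}"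
  shows "Fo k i j \<subseteq> {1..2*k+1} \<and> card (Fo k i j) = k"
proof (cases "i \<le> k")
  case True
  show ?thesis
  proof (cases "j \<le> k")
    case True with \<open>i\<le>k\<close> show ?thesis by (simp add: Fo_RC)
  next
    case False
    have "nuo k i j \<in> {k+1..2*k+1}" using nuo_range i j \<open>i \<le> k\<close> False by auto
    then show ?thesis using \<open>i\<le>k\<close> False by (auto simp: Fo_RC')
  qed
next
  case False
  note ik = this
  show ?thesis
  proof (cases "j \<le> k")
    case True
    have "(if j = 1 then i else sucT k i) \<in> {k+1..2*k+1}" using sucT_range[of k i] i ik k by auto
    then show ?thesis using ik True by (auto simp: Fo_R'C)
  next
    case False
    note jk = this
    show ?thesis
    proof (cases "i = j")
      case True then show ?thesis using ik jk by (auto simp: Fo_diag)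
    next
      case False
      have t: "tau k i j \<in> {1..k}" using tau_range[of i k j] i j ik jk False by auto
      have x: "(if j = own k i then i else sucT k i) \<in> {k+1..2*k+1}"
        using sucT_range[of k i] i ik k by auto
      have "card (insert (if j = own k i then i else sucT k i) ({1..k} - {tau k i j})) = k"
        using t x k by (subst card_insert_disjoint) auto
      then show ?thesis using ik jk False t x by (auto simp: Fo_off)
    qed
  qed
qed

lemma Fo_row_ge:
  assumes k: "2 \<le> k" and i: "i \<in> {1..2*k+1}" and s: "s \<in> {1..2*k+1}"
  shows "k \<le> card {t\<in>{1..2*k+1}. s \<in> Fo k i t}"
proof -
  let ?A = "{t\<in>{1..k}. s \<in> Fo k i t}" and ?B = "{t\<in>{k+1..2*k+1}. s \<in> Fo k i t}"
  have split: "card {t\<in>{1..2*k+1}. s \<in> Fo k i t} = card ?A + card ?B"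
    by (rule card_split) simp
  have fB: "finite ?B" and fA: "finite ?A" by auto
  show ?thesis
  proof (cases "i \<le> k")
    case ik: True
    show ?thesis
    proof (cases "s \<le> k")
      case True
      then have "?A = {1..k}" using ik s by (auto simp: Fo_RC)
      then show ?thesis using split by simp
    next
      case False
      then have "?B = {t\<in>{k+1..2*k+1}. s \<noteq> nuo k i t}" using ik s by (auto simp: Fo_RC')
      moreover have "card {k+1..2*k+1} - 1 \<le> card {t\<in>{k+1..2*k+1}. s \<noteq> nuo k i t}"
      proof (rule card_ge_minus_one)
        fix x y assume "x \<in> {k+1..2*k+1}" "y \<in> {k+1..2*k+1}" "\<not> (s \<noteq> nuo k i x)"
          "\<not> (s \<noteq> nuo k i y)"
        then show "x = y" using nuo_inj_t[of i k x y] i ik by auto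
      qed simp
      ultimately show ?thesis using split by simp
    qed
  next
    case ik: False
    have X: "(if t = own k i then i else sucT k i) \<in> {k+1..2*k+1}" for t
      using sucT_range[of k i] i ik k by auto
    show ?thesis
    proof (cases "s \<le> k")
      case True
      have "?B = {t\<in>{k+1..2*k+1}. t = i \<or> s \<noteq> tau k i t}"
      proof (intro set_eqI iffI)
        fix t assume "t \<in> ?B"
        then show "t \<in> {t\<in>{k+1..2*k+1}. t = i \<or> s \<noteq> tau k i t}"
          using ik \<open>s \<le> k\<close> X[of t] by (cases "t = i") (auto simp: Fo_off)
      next
        fix t assume t: "t \<in> {t\<in>{k+1..2*k+1}. t = i \<or> s \<noteq> tau k i t}"
        show "t \<in> ?B"
        proof (cases "t = i")
          case True then show ?thesis using t ik True s \<open>s \<le> k\<close> by (simp add: Fo_diag)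
        next
          case False then show ?thesis using t ik s \<open>s \<le> k\<close> by (simp add: Fo_off)
        qed
      qed
      moreover have "card {k+1..2*k+1} - 1 \<le> card {t\<in>{k+1..2*k+1}. t = i \<or> s \<noteq> tau k i t}"
      proof (rule card_ge_minus_one)
        fix x y assume "x \<in> {k+1..2*k+1}" "y \<in> {k+1..2*k+1}" "\<not> (x = i \<or> s \<noteq> tau k i x)"
          "\<not> (y = i \<or> s \<noteq> tau k i y)"
        then show "x = y" using tau_inj_t[of i k x y] i ik by auto
      qed simp
      ultimately show ?thesis using split by simp
    next
      case sk: False
      have si: "sucT k i \<noteq> i" using sucT_ne[of k i] k by simp
      have oi: "own k i \<noteq> i" "own k i \<in> {k+1..2*k+1}" using own_ne[of k i] own_range[of k i] k by simp_all
      consider "s \<noteq> i \<and> s \<noteq> sucT k i" | "s = i" | "s = sucT k i" by blast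
      then show ?thesis
      proof cases
        case 1
        have "s \<in> Fo k i t" if "t \<in> {1..k}" for t using that ik s sk 1 by (simp add: Fo_R'C)
        then have "?A = {1..k}" by auto
        then show ?thesis using split by simp
      next
        case 2
        have "s \<in> Fo k i t" if "t \<in> {2..k}" for t using that ik s sk 2 si by (simp add: Fo_R'C)
        then have "{2..k} \<subseteq> ?A" by auto
        then have "card {2..k} \<le> card ?A" using card_mono[OF fA] by blast
        then have a: "k - 1 \<le> card ?A" by simp
        have "\<not> own k i \<le> k" using oi by simp
        then have "s \<in> Fo k i (own k i)" using ik oi 2 by (simp add: Fo_off)
        then have "{own k i} \<subseteq> ?B" using oi by simp
        then have "card {own k i} \<le> card ?B" using card_mono[OF fB] by blast
        then have b: "1 \<le> card ?B" by simp
        show ?thesis using a b split k by linarith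
      next
        case 3
        have "s \<in> Fo k i 1" using ik s sk 3 si k by (simp add: Fo_R'C)
        then have sub1: "{1} \<subseteq> ?A" using k by simp
        have "card {1::nat} \<le> card ?A" using card_mono[OF fA sub1] by simp
        then have a: "1 \<le> card ?A" by simp
        have sub2: "{k+1..2*k+1} - {i, own k i} \<subseteq> ?B"
        proof
          fix t assume t: "t \<in> {k+1..2*k+1} - {i, own k i}"
          then have "\<not> t \<le> k" "t \<noteq> i" "t \<noteq> own k i" by auto
          then have "s \<in> Fo k i t" using ik 3 by (simp add: Fo_off)
          then show "t \<in> ?B" using t by simp
        qed
        have "card ({k+1..2*k+1} - {i, own k i}) \<le> card ?B" using card_mono[OF fB sub2] by simp
        moreover have "card ({k+1..2*k+1} - {i, own k i}) = k - 1"
        proof -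
          have "{i, own k i} \<subseteq> {k+1..2*k+1}" using i ik oi by auto
          then have "card ({k+1..2*k+1} - {i, own k i}) = card {k+1..2*k+1} - card {i, own k i}"
            by (intro card_Diff_subset) auto
          also have "card {i, own k i} = 2" using oi by simp
          finally show ?thesis by simp
        qed
        ultimately show ?thesis using a split k by linarith
      qed
    qed
  qed
qed

lemma Fo_witness:
  assumes k: "2 \<le> k" and j: "j \<in> {k+1..2*k+1}" and s: "s \<in> {k+1..2*k+1}" and ns: "s \<noteq> k + 1 + zz k j"
  shows "\<exists>w\<in>{k+1..2*k+1}. w \<noteq> j \<and> s = (if j = own k w then w else sucT k w)"
proof -
  have "j = 2*k+1 \<or> j = 2*k \<or> j < 2*k" using j by auto
  then consider "j = 2*k+1" | "j = 2*k" | "j < 2*k" by blast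
  then show ?thesis
  proof cases
    case 1
    then have "s \<noteq> 2*k+1" using ns by (simp add: zz_def)
    then show ?thesis using 1 s by (intro bexI[of _ s]) (auto simp: own_def)
  next
    case 2
    then have sk: "s \<noteq> k+1" using ns k by (simp add: zz_def)
    show ?thesis
    proof (cases "s = 2*k+1")
      case True then show ?thesis using 2 k by (intro bexI[of _ "2*k+1"]) (auto simp: own_def)
    next
      case False then show ?thesis using 2 k s sk by (intro bexI[of _ "s - 1"]) (auto simp: own_def sucT_def)
    qed
  next
    case 3
    then have sk: "s \<noteq> j+1" using ns k j by (simp add: zz_def)
    show ?thesis
    proof (cases "s = k+1")
      case True then show ?thesis using 3 k j by (intro bexI[of _ "2*k+1"]) (auto simp: own_def sucT_def)
    next
      case False then show ?thesis using 3 k s sk j by (intro bexI[of _ "s - 1"]) (auto simp: own_def sucT_def)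
    qed
  qed
qed

lemma Fo_col_ge:
  assumes k: "2 \<le> k" and j: "j \<in> {1..2*k+1}" and s: "s \<in> {1..2*k+1}"
  shows "k \<le> card {t\<in>{1..2*k+1}. s \<in> Fo k t j}"
proof -
  let ?A = "{t\<in>{1..k}. s \<in> Fo k t j}" and ?B = "{t\<in>{k+1..2*k+1}. s \<in> Fo k t j}"
  have split: "card {t\<in>{1..2*k+1}. s \<in> Fo k t j} = card ?A + card ?B"
    by (rule card_split) simp
  have fB: "finite ?B" and fA: "finite ?A" by auto
  show ?thesis
  proof (cases "j \<le> k")
    case jk: True
    show ?thesis
    proof (cases "s \<le> k")
      case True
      have "s \<in> Fo k t j" if "t \<in> {1..k}" for t using that jk s True by (simp add: Fo_RC)
      then have "?A = {1..k}" by auto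
      then show ?thesis using split by simp
    next
      case False
      have "?B = {t\<in>{k+1..2*k+1}. s \<noteq> (if j = 1 then t else sucT k t)}"
        using jk s False by (auto simp: Fo_R'C)
      moreover have "card {k+1..2*k+1} - 1 \<le> card {t\<in>{k+1..2*k+1}. s \<noteq> (if j = 1 then t else sucT k t)}"
      proof (rule card_ge_minus_one)
        fix x y assume "x \<in> {k+1..2*k+1}" "y \<in> {k+1..2*k+1}" "\<not> s \<noteq> (if j = 1 then x else sucT k x)"
          "\<not> s \<noteq> (if j = 1 then y else sucT k y)"
        then show "x = y" using sucT_inj[of x k y] by (auto split: if_splits)
      qed simp
      ultimately show ?thesis using split by simp
    qed
  next
    case jk: False
    show ?thesis
    proof (cases "s \<le> k")
      case True
      have X: "(if j = own k t then t else sucT k t) \<in> {k+1..2*k+1}" if "t \<in> {k+1..2*k+1}" for t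
        using sucT_range[of k t] that k by auto
      have "?B = {t\<in>{k+1..2*k+1}. t = j \<or> s \<noteq> tau k t j}"
      proof (intro set_eqI iffI)
        fix t assume t: "t \<in> ?B"
        then have tt: "t \<in> {k+1..2*k+1}" by simp
        show "t \<in> {t\<in>{k+1..2*k+1}. t = j \<or> s \<noteq> tau k t j}"
        proof (cases "t = j")
          case True then show ?thesis using tt by simp
        next
          case False
          have "s \<in> Fo k t j" using t by simp
          moreover have "\<not> t \<le> k" using tt by simp
          ultimately have "s \<in> insert (if j = own k t then t else sucT k t) ({1..k} - {tau k t j})"
            using Fo_off[of t k j] jk False by simp
          then show ?thesis using X[OF tt] True tt by auto
        qed
      next
        fix t assume t: "t \<in> {t\<in>{k+1..2*k+1}. t = j \<or> s \<noteq> tau k t j}"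
        show "t \<in> ?B"
        proof (cases "t = j")
          case True then show ?thesis using t jk s \<open>s \<le> k\<close> by (simp add: Fo_diag)
        next
          case False then show ?thesis using t jk s \<open>s \<le> k\<close> by (simp add: Fo_off)
        qed
      qed
      moreover have "card {k+1..2*k+1} - 1 \<le> card {t\<in>{k+1..2*k+1}. t = j \<or> s \<noteq> tau k t j}"
      proof (rule card_ge_minus_one)
        fix x y assume "x \<in> {k+1..2*k+1}" "y \<in> {k+1..2*k+1}" "\<not> (x = j \<or> s \<noteq> tau k x j)"
          "\<not> (y = j \<or> s \<noteq> tau k y j)"
        then show "x = y" using tau_inj_i[of j k x y] j jk by auto
      qed simp
      ultimately show ?thesis using split by simp
    next
      case sk: False
      have Aeq: "?A = {t\<in>{1..k}. s \<noteq> nuo k t j}" using jk s sk by (auto simp: Fo_RC')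
      show ?thesis
      proof (cases "s = k + 1 + zz k j")
        case True
        have "s \<noteq> nuo k t j" if "t \<in> {1..k}" for t using nuo_miss[of t k j] that j jk True by auto
        then have "{t\<in>{1..k}. s \<noteq> nuo k t j} = {1..k}" by blast
        then have "?A = {1..k}" using Aeq by simp
        then show ?thesis using split by simp
      next
        case False
        have "card {1..k} - 1 \<le> card {t\<in>{1..k}. s \<noteq> nuo k t j}"
        proof (rule card_ge_minus_one)
          fix x y assume "x \<in> {1..k}" "y \<in> {1..k}" "\<not> s \<noteq> nuo k x j" "\<not> s \<noteq> nuo k y j"
          then show "x = y" using nuo_inj_i[of x k y j] j jk by auto
        qed simp
        then have a: "k - 1 \<le> card ?A" using Aeq by simp
        obtain w where w: "w \<in> {k+1..2*k+1}" "w \<noteq> j" "s = (if j = own k w then w else sucT k w)"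
          using Fo_witness[OF k _ _ False] j jk s sk by auto
        then have "s \<in> Fo k w j" using jk by (simp add: Fo_off)
        then have sub: "{w} \<subseteq> ?B" using w by simp
        have "card {w} \<le> card ?B" using card_mono[OF fB sub] by simp
        then have "1 \<le> card ?B" by simp
        then show ?thesis using a split k by linarith
      qed
    qed
  qed
qed

definition lamo :: "nat \<Rightarrow> nat \<Rightarrow> int" where "lamo k s = int (k+1) - int s"
definition muo :: "nat \<Rightarrow> nat \<Rightarrow> int" where "muo k i = (if i = 2*k+1 then - int k else int k - int i)"
definition ao :: "nat \<Rightarrow> nat \<Rightarrow> nat \<Rightarrow> int" where
  "ao k i s = (if k < i \<and> k < s then lamo k s - muo k i else 0)"
definition bo :: "nat \<Rightarrow> nat \<Rightarrow> nat \<Rightarrow> int" where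
  "bo k j s = (if k < s then (if j = 2*k+1 then -1 else if j \<le> k then - lamo k s else 0) else 0)"
definition co :: "nat \<Rightarrow> nat \<Rightarrow> nat \<Rightarrow> int" where
  "co k i j = (if k < i \<and> j \<le> k then muo k i else if i \<le> k \<and> j = 2*k+1 then 1 else 0)"

lemma Fo_dvd:
  assumes k: "2 \<le> k" and i: "i \<in> {1..2*k+1}" and j: "j \<in> {1..2*k+1}" and s: "s \<in> Fo k i j"
  shows "int k dvd (ao k i s + bo k j s + co k i j)"
proof (cases "i \<le> k")
  case ik: True
  show ?thesis
  proof (cases "j \<le> k")
    case True
    then have "s \<le> k" using s ik by (simp add: Fo_RC)
    then show ?thesis using ik True by (simp add: ao_def bo_def co_def)
  next
    case False
    then have "k < s" using s ik by (simp add: Fo_RC')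
    then show ?thesis using ik False by (simp add: ao_def bo_def co_def)
  qed
next
  case ik: False
  show ?thesis
  proof (cases "j \<le> k")
    case True
    then have "k < s" using s ik by (simp add: Fo_R'C)
    then show ?thesis using ik True by (simp add: ao_def bo_def co_def)
  next
    case jk: False
    show ?thesis
    proof (cases "i = j")
      case True
      then have "s \<le> k" using s ik by (simp add: Fo_diag)
      then show ?thesis using ik jk by (simp add: ao_def bo_def co_def)
    next
      case ij: False
      have sm: "s = (if j = own k i then i else sucT k i) \<or> s \<le> k"
        using s ik jk ij by (auto simp: Fo_off)
      show ?thesis
      proof (cases "s \<le> k")
        case True then show ?thesis using ik jk by (simp add: ao_def bo_def co_def)
      next
        case sk: False
        then have sx: "s = (if j = own k i then i else sucT k i)" using sm by simp
        have W: "ao k i s + bo k j s + co k i j = lamo k s - muo k i - (if j = 2*k+1 then 1 else 0)"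
          using ik jk sk by (simp add: ao_def bo_def co_def)
        consider "i \<noteq> 2*k+1" "j = 2*k+1" | "i \<noteq> 2*k+1" "j \<noteq> 2*k+1" | "i = 2*k+1" "j = 2*k"
          | "i = 2*k+1" "j \<noteq> 2*k" by blast
        then show ?thesis
        proof cases
          case 1
          then have "s = i" using sx by (simp add: own_def)
          then show ?thesis using W 1 by (simp add: lamo_def muo_def)
        next
          case 2
          then have "s = i + 1" using sx i by (simp add: own_def sucT_def)
          then show ?thesis using W 2 i by (simp add: lamo_def muo_def)
        next
          case 3
          then have "s = i" using sx by (simp add: own_def)
          then show ?thesis using W 3 by (simp add: lamo_def muo_def)
        next
          case 4
          then have "s = k + 1" "j \<noteq> 2*k+1" using sx ij by (auto simp: own_def sucT_def)
          then show ?thesis using W 4 by (simp add: lamo_def muo_def)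
        qed
      qed
    qed
  qed
qed

lemma sum_hi: "(\<Sum>s\<in>{1..n}. if m < s then f s else 0) = (\<Sum>s\<in>{m+1..n::nat}. f s)"
proof -
  have "(\<Sum>s\<in>{1..n}. if m < s then f s else 0) = (\<Sum>s\<in>{1..n} \<inter> {s. m < s}. f s)"
    by (simp add: sum.inter_restrict)
  also have "{1..n} \<inter> {s. m < s} = {m+1..n}" by auto
  finally show ?thesis .
qed

lemma sum_lo: "m \<le> n \<Longrightarrow> (\<Sum>s\<in>{1..n}. if s \<le> m then f s else 0) = (\<Sum>s\<in>{1..m::nat}. f s)"
proof -
  assume mn: "m \<le> n"
  have "(\<Sum>s\<in>{1..n}. if s \<le> m then f s else 0) = (\<Sum>s\<in>{1..n} \<inter> {s. s \<le> m}. f s)"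
    by (simp add: sum.inter_restrict)
  also have "{1..n} \<inter> {s. s \<le> m} = {1..m}" using mn by auto
  finally show ?thesis .
qed

declare sum.cl_ivl_Suc [simp del]

lemma Fo_sum:
  assumes k: "2 \<le> k"
  shows "(\<Sum>i\<in>{1..2*k+1}. \<Sum>x\<in>{1..2*k+1}. ao k i x) + (\<Sum>j\<in>{1..2*k+1}. \<Sum>x\<in>{1..2*k+1}. bo k j x)
       + (\<Sum>i\<in>{1..2*k+1}. \<Sum>j\<in>{1..2*k+1}. co k i j) = int k - 1"
proof -
  define U where "U = {k+1..2*k+1}"
  define Lam where "Lam = (\<Sum>s\<in>U. lamo k s)"
  define M where "M = (\<Sum>i\<in>U. muo k i)"
  have cU: "card U = k + 1" by (simp add: U_def)
  have a1: "(\<Sum>x\<in>{1..2*k+1}. ao k i x) = (if k < i then Lam - int (k+1) * muo k i else 0)" for i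
  proof (cases "k < i")
    case True
    then have "(\<Sum>x\<in>{1..2*k+1}. ao k i x) = (\<Sum>x\<in>{1..2*k+1}. if k < x then lamo k x - muo k i else 0)"
      by (simp add: ao_def)
    also have "\<dots> = (\<Sum>x\<in>U. lamo k x - muo k i)" unfolding U_def by (rule sum_hi)
    also have "\<dots> = Lam - int (k+1) * muo k i" by (simp add: sum_subtractf Lam_def cU)
    finally show ?thesis using True by simp
  qed (simp add: ao_def)
  have A: "(\<Sum>i\<in>{1..2*k+1}. \<Sum>x\<in>{1..2*k+1}. ao k i x) = int (k+1) * Lam - int (k+1) * M"
  proof -
    have "(\<Sum>i\<in>{1..2*k+1}. \<Sum>x\<in>{1..2*k+1}. ao k i x)
       = (\<Sum>i\<in>{1..2*k+1}. if k < i then Lam - int (k+1) * muo k i else 0)"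
      by (simp only: a1)
    also have "\<dots> = (\<Sum>i\<in>U. Lam - int (k+1) * muo k i)" unfolding U_def by (rule sum_hi)
    also have "\<dots> = int (k+1) * Lam - int (k+1) * M"
      by (simp add: sum_subtractf M_def cU sum_distrib_left)
    finally show ?thesis .
  qed
  have b1: "(\<Sum>x\<in>{1..2*k+1}. bo k j x) = (if j = 2*k+1 then - int (k+1) else if j \<le> k then - Lam else 0)" for j
  proof -
    have "(\<Sum>x\<in>{1..2*k+1}. bo k j x) = (\<Sum>x\<in>{1..2*k+1}. if k < x then (if j = 2*k+1 then -1 else if j \<le> k then - lamo k x else 0) else 0)"
      by (simp only: bo_def)
    also have "\<dots> = (\<Sum>x\<in>U. if j = 2*k+1 then -1 else if j \<le> k then - lamo k x else 0)"
      unfolding U_def by (rule sum_hi)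
    also have "\<dots> = (if j = 2*k+1 then - int (k+1) else if j \<le> k then - Lam else 0)"
      by (simp add: cU Lam_def sum_negf)
    finally show ?thesis .
  qed
  have B: "(\<Sum>j\<in>{1..2*k+1}. \<Sum>x\<in>{1..2*k+1}. bo k j x) = - int (k+1) - int k * Lam"
  proof -
    have e: "(if j = 2*k+1 then - int (k+1) else if j \<le> k then - Lam else 0)
        = (if j = 2*k+1 then - int (k+1) else 0) + (if j \<le> k then - Lam else 0)" for j
      by auto
    have "(\<Sum>j\<in>{1..2*k+1}. \<Sum>x\<in>{1..2*k+1}. bo k j x)
        = (\<Sum>j\<in>{1..2*k+1}. (if j = 2*k+1 then - int (k+1) else 0)) + (\<Sum>j\<in>{1..2*k+1}. (if j \<le> k then - Lam else 0))"
      by (simp only: b1 e sum.distrib)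
    also have "(\<Sum>j\<in>{1..2*k+1}. (if j = 2*k+1 then - int (k+1) else 0)) = - int (k+1)"
      by (simp add: sum.delta')
    also have "(\<Sum>j\<in>{1..2*k+1}. (if j \<le> k then - Lam else 0)) = (\<Sum>j\<in>{1..k}. - Lam)"
      by (rule sum_lo) simp
    finally show ?thesis by simp
  qed
  have c1: "(\<Sum>j\<in>{1..2*k+1}. co k i j) = (if k < i then int k * muo k i else 1)" for i
  proof (cases "k < i")
    case True
    then have "(\<Sum>j\<in>{1..2*k+1}. co k i j) = (\<Sum>j\<in>{1..2*k+1}. if j \<le> k then muo k i else 0)"
      by (intro sum.cong) (auto simp: co_def)
    also have "\<dots> = (\<Sum>j\<in>{1..k}. muo k i)" by (rule sum_lo) simp
    finally show ?thesis using True by simp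
  next
    case False
    then have "(\<Sum>j\<in>{1..2*k+1}. co k i j) = (\<Sum>j\<in>{1..2*k+1}. if j = 2*k+1 then 1 else 0)"
      by (intro sum.cong) (auto simp: co_def)
    also have "\<dots> = 1" by (simp add: sum.delta')
    finally show ?thesis using False by simp
  qed
  have C: "(\<Sum>i\<in>{1..2*k+1}. \<Sum>j\<in>{1..2*k+1}. co k i j) = int k * M + int k"
  proof -
    have e: "(if k < i then int k * muo k i else 1) = (if k < i then int k * muo k i else 0) + (if i \<le> k then 1 else 0)" for i
      by auto
    have "(\<Sum>i\<in>{1..2*k+1}. \<Sum>j\<in>{1..2*k+1}. co k i j)
       = (\<Sum>i\<in>{1..2*k+1}. if k < i then int k * muo k i else 0) + (\<Sum>i\<in>{1..2*k+1}. if i \<le> k then 1 else 0)"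
      by (simp only: c1 e sum.distrib)
    also have "(\<Sum>i\<in>{1..2*k+1}. if k < i then int k * muo k i else 0) = int k * M"
      unfolding M_def U_def sum_distrib_left by (rule sum_hi)
    also have "(\<Sum>i\<in>{1..2*k+1}. if i \<le> k then (1::int) else 0) = (\<Sum>i\<in>{1..k}. 1)"
      by (rule sum_lo) simp
    finally show ?thesis by simp
  qed
  have D: "Lam - M = int k"
  proof -
    have "Lam - M = (\<Sum>i\<in>U. lamo k i - muo k i)" by (simp add: Lam_def M_def sum_subtractf)
    also have "\<dots> = (\<Sum>i\<in>U. if i = 2*k+1 then 0 else 1)"
      by (intro sum.cong) (auto simp: U_def lamo_def muo_def)
    also have "\<dots> = (\<Sum>i\<in>U - {2*k+1}. 1)"
      by (simp add: sum.If_cases U_def Diff_eq)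
    also have "U - {2*k+1} = {k+1..2*k}" by (auto simp: U_def)
    also have "(\<Sum>i\<in>{k+1..2*k}. (1::int)) = int k" by simp
    finally show ?thesis .
  qed
  show ?thesis using A B C D by (simp add: algebra_simps)
qed

lemma odd_case:
  assumes k: "2 \<le> k"
  shows "\<exists>A. is_array (2*k+1) 2 k A \<and> \<not> layerable (2*k+1) 2 k A"
proof (intro exI conjI)
  let ?A = "\<lambda>c. Fo k (c!0) (c!1)"
  show "is_array (2*k+1) 2 k ?A"
  proof (rule array_of)
    fix i j assume "i \<in> {1..2*k+1}" "j \<in> {1..2*k+1}"
    then show "Fo k i j \<subseteq> {1..2*k+1} \<and> card (Fo k i j) = k" using Fo_cell k by blast
  next
    fix i x assume i: "i \<in> {1..2*k+1}" and x: "x \<in> {1..2*k+1}"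
    show "card {t\<in>{1..2*k+1}. x \<in> Fo k i t} = k"
      by (rule count_exact[OF _ _ x]) (use Fo_cell[OF k i] Fo_row_ge[OF k i] in auto)
  next
    fix j x assume j: "j \<in> {1..2*k+1}" and x: "x \<in> {1..2*k+1}"
    show "card {t\<in>{1..2*k+1}. x \<in> Fo k t j} = k"
      by (rule count_exact[OF _ _ x]) (use Fo_cell[OF k _ j] Fo_col_ge[OF k j] in auto)
  qed
  have sub: "\<forall>c\<in>cells (2*k+1) 2. ?A c \<subseteq> {1..2*k+1}"
  proof
    fix c assume "c \<in> cells (2*k+1) 2"
    then obtain i j where "c = [i,j]" "i \<in> {1..2*k+1}" "j \<in> {1..2*k+1}" by (auto simp: cells2)
    then show "?A c \<subseteq> {1..2*k+1}" using Fo_cell[OF k, of i j] by simp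
  qed
  have "\<not> is_layer (2*k+1) 2 ?A L" for L
  proof (rule no_layer[OF sub, where a = "ao k" and b = "bo k" and c = "co k" and k = "int k"])
    fix i j x assume "i \<in> {1..2*k+1}" "j \<in> {1..2*k+1}" "x \<in> ?A [i,j]"
    then show "int k dvd (ao k i x + bo k j x + co k i j)" using Fo_dvd[OF k] by simp
  next
    have "\<not> int k dvd (int k - 1)"
    proof
      assume h: "int k dvd (int k - 1)"
      have "int k dvd (int k - (int k - 1))" by (rule dvd_diff[OF dvd_refl h])
      then have "int k dvd 1" by simp
      then show False using k by simp
    qed
    then show "\<not> int k dvd ((\<Sum>i\<in>{1..2*k+1}. \<Sum>x\<in>{1..2*k+1}. ao k i x) + (\<Sum>j\<in>{1..2*k+1}. \<Sum>x\<in>{1..2*k+1}. bo k j x)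
       + (\<Sum>i\<in>{1..2*k+1}. \<Sum>j\<in>{1..2*k+1}. co k i j))" using Fo_sum[OF k] by simp
  qed
  then show "\<not> layerable (2*k+1) 2 k ?A" using k by (intro not_layerable) auto
qed



definition sme :: "nat \<Rightarrow> nat \<Rightarrow> nat \<Rightarrow> nat" where
  "sme k i j = (if i + j < 2*k+2 then i + j - k - 2 else i + j - 2*k - 2)"
definition spe :: "nat \<Rightarrow> nat \<Rightarrow> nat \<Rightarrow> nat" where
  "spe k i j = (if i + j < 3*k+2 then i + j - 2*k - 2 else i + j - 3*k - 2)"
definition Fe :: "nat \<Rightarrow> nat \<Rightarrow> nat \<Rightarrow> nat set" where
  "Fe k i j = (if j < k then (if i \<le> k then {1..k} else {k+1..2*k})
     else if j = k then (if i \<le> k then {k+1..2*k} else {1..k})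
     else if i \<le> k then insert (sme k i j + 1) ({k+1..2*k} - {k+1+sme k i j})
     else if spe k i j = 0 then insert 1 ({k+1..2*k} - {k+1})
     else if spe k i j = 1 then insert (k+1) ({1..k} - {1})
     else {1..k})"

lemma Fe_C: "j < k \<Longrightarrow> Fe k i j = (if i \<le> k then {1..k} else {k+1..2*k})" by (simp add: Fe_def)
lemma Fe_S: "Fe k i k = (if i \<le> k then {k+1..2*k} else {1..k})" by (simp add: Fe_def)
lemma Fe_R: "i \<le> k \<Longrightarrow> k < j \<Longrightarrow> Fe k i j = insert (sme k i j + 1) ({k+1..2*k} - {k+1+sme k i j})"
  by (simp add: Fe_def)
lemma Fe_R': "k < i \<Longrightarrow> k < j \<Longrightarrow> Fe k i j = (if spe k i j = 0 then insert 1 ({k+1..2*k} - {k+1})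
     else if spe k i j = 1 then insert (k+1) ({1..k} - {1}) else {1..k})"
  by (simp add: Fe_def)

lemma sme_range: "i \<in> {1..k} \<Longrightarrow> j \<in> {k+1..2*k} \<Longrightarrow> sme k i j < k"
  unfolding sme_def by auto
lemma sme_inj: "i \<in> {1..k} \<Longrightarrow> j1 \<in> {k+1..2*k} \<Longrightarrow> j2 \<in> {k+1..2*k} \<Longrightarrow> sme k i j1 = sme k i j2
   \<Longrightarrow> j1 = j2"
  unfolding sme_def by (auto split: if_splits)
lemma sme_wit_j: "i \<in> {1..k} \<Longrightarrow> v < k \<Longrightarrow> \<exists>j\<in>{k+1..2*k}. sme k i j = v"
proof -
  assume i: "i \<in> {1..k}" and v: "v < k"
  show ?thesis
  proof (cases "i \<le> v + 1")
    case True then show ?thesis using i v by (intro bexI[of _ "v + k + 2 - i"]) (auto simp: sme_def)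
  next
    case False then show ?thesis using i v by (intro bexI[of _ "v + 2*k + 2 - i"]) (auto simp: sme_def)
  qed
qed
lemma sme_sym: "sme k i j = sme k j i" unfolding sme_def by (simp add: add.commute)

lemma spe_range: "i \<in> {k+1..2*k} \<Longrightarrow> j \<in> {k+1..2*k} \<Longrightarrow> spe k i j < k"
  unfolding spe_def by auto
lemma spe_inj: "i \<in> {k+1..2*k} \<Longrightarrow> j1 \<in> {k+1..2*k} \<Longrightarrow> j2 \<in> {k+1..2*k} \<Longrightarrow> spe k i j1 = spe k i j2
   \<Longrightarrow> j1 = j2"
  unfolding spe_def by (auto split: if_splits)
lemma spe_wit_j: "i \<in> {k+1..2*k} \<Longrightarrow> v < k \<Longrightarrow> \<exists>j\<in>{k+1..2*k}. spe k i j = v"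
proof -
  assume i: "i \<in> {k+1..2*k}" and v: "v < k"
  show ?thesis
  proof (cases "i \<le> v + k + 1")
    case True then show ?thesis using i v by (intro bexI[of _ "v + 2*k + 2 - i"]) (auto simp: spe_def)
  next
    case False then show ?thesis using i v by (intro bexI[of _ "v + 3*k + 2 - i"]) (auto simp: spe_def)
  qed
qed
lemma spe_sym: "spe k i j = spe k j i" unfolding spe_def by (simp add: add.commute)

lemma Fe_cell:
  assumes k: "3 \<le> k" and i: "i \<in> {1..2*k}" and j: "j \<in> {1..2*k}"
  shows "Fe k i j \<subseteq> {1..2*k} \<and> card (Fe k i j) = k"
proof -
  consider "j < k" | "j = k" | "k < j \<and> i \<le> k" | "k < j \<and> k < i" by linarith
  then show ?thesis
  proof cases
    case 1 then show ?thesis by (simp add: Fe_C)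
  next
    case 2 then show ?thesis by (simp add: Fe_S)
  next
    case 3
    have r: "sme k i j < k" using sme_range[of i k j] i j 3 by auto
    have "card (insert (sme k i j + 1) ({k+1..2*k} - {k+1+sme k i j})) = k"
      using r by (subst card_insert_disjoint) auto
    then show ?thesis using 3 r by (auto simp: Fe_R)
  next
    case 4
    have "card (insert 1 ({k+1..2*k} - {k+1})) = k" using k by (subst card_insert_disjoint) auto
    moreover have "card (insert (k+1) ({1..k} - {1})) = k" using k by (subst card_insert_disjoint) auto
    ultimately show ?thesis using 4 k by (auto simp: Fe_R')
  qed
qed

lemma sme_inj_i: "j \<in> {k+1..2*k} \<Longrightarrow> i1 \<in> {1..k} \<Longrightarrow> i2 \<in> {1..k} \<Longrightarrow> sme k i1 j = sme k i2 j
   \<Longrightarrow> i1 = i2"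
  unfolding sme_def by (auto split: if_splits)
lemma sme_wit_i: "j \<in> {k+1..2*k} \<Longrightarrow> v < k \<Longrightarrow> \<exists>i\<in>{1..k}. sme k i j = v"
proof -
  assume j: "j \<in> {k+1..2*k}" and v: "v < k"
  show ?thesis
  proof (cases "j \<le> v + k + 1")
    case True then show ?thesis using j v by (intro bexI[of _ "v + k + 2 - j"]) (auto simp: sme_def)
  next
    case False then show ?thesis using j v by (intro bexI[of _ "v + 2*k + 2 - j"]) (auto simp: sme_def)
  qed
qed

lemma memR: "i \<in> {1..k} \<Longrightarrow> j \<in> {k+1..2*k} \<Longrightarrow>
   s \<in> Fe k i j \<longleftrightarrow> (if s \<le> k then s = sme k i j + 1 else s \<in> {k+1..2*k} \<and> s \<noteq> k+1+sme k i j)"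
  using sme_range[of i k j] by (auto simp: Fe_R)

lemma memR': "i \<in> {k+1..2*k} \<Longrightarrow> j \<in> {k+1..2*k} \<Longrightarrow> 3 \<le> k \<Longrightarrow> s \<in> {1..2*k} \<Longrightarrow>
   s \<in> Fe k i j \<longleftrightarrow> (if s \<le> k then spe k i j \<noteq> (if s = 1 then 1 else 0)
                        else spe k i j = (if s = k+1 then 1 else 0))"
  by (auto simp: Fe_R')

lemma Fe_row_ge:
  assumes k: "3 \<le> k" and i: "i \<in> {1..2*k}" and s: "s \<in> {1..2*k}"
  shows "k \<le> card {t\<in>{1..2*k}. s \<in> Fe k i t}"
proof -
  let ?A = "{t\<in>{1..k}. s \<in> Fe k i t}" and ?B = "{t\<in>{k+1..2*k}. s \<in> Fe k i t}"
  have split: "card {t\<in>{1..2*k}. s \<in> Fe k i t} = card ?A + card ?B"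
    by (rule card_split) simp
  have fB: "finite ?B" and fA: "finite ?A" by auto
  show ?thesis
  proof (cases "i \<le> k")
    case ik: True
    show ?thesis
    proof (cases "s \<le> k")
      case sk: True
      have "s \<in> Fe k i t" if "t \<in> {1..k-1}" for t
      proof -
        have "t < k" using that k by auto
        then show ?thesis using ik s sk by (simp add: Fe_C)
      qed
      then have sub: "{1..k-1} \<subseteq> ?A" by auto
      have a: "k - 1 \<le> card ?A" using card_mono[OF fA sub] by simp
      have v: "s - 1 < k" using s sk by auto
      have "i \<in> {1..k}" using ik i by simp
      then obtain j where j: "j \<in> {k+1..2*k}" "sme k i j = s - 1" using sme_wit_j[OF _ v] by blast
      then have "s \<in> Fe k i j" using memR[of i k j s] ik i s sk by simp
      then have sub2: "{j} \<subseteq> ?B" using j by simp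
      have "1 \<le> card ?B" using card_mono[OF fB sub2] by simp
      then show ?thesis using a split k by linarith
    next
      case sk: False
      have "s \<in> Fe k i k" using ik s sk by (simp add: Fe_S)
      then have sub: "{k} \<subseteq> ?A" using k by simp
      have a: "1 \<le> card ?A" using card_mono[OF fA sub] by simp
      have Beq: "?B = {t\<in>{k+1..2*k}. s \<noteq> k+1+sme k i t}"
        using memR[of i k _ s] ik i s sk by auto
      have "card {k+1..2*k} - 1 \<le> card {t\<in>{k+1..2*k}. s \<noteq> k+1+sme k i t}"
      proof (rule card_ge_minus_one)
        fix x y assume "x \<in> {k+1..2*k}" "y \<in> {k+1..2*k}" "\<not> s \<noteq> k+1+sme k i x" "\<not> s \<noteq> k+1+sme k i y"
        then show "x = y" using sme_inj[of i k x y] ik i by auto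
      qed simp
      then have "k - 1 \<le> card ?B" using Beq by simp
      then show ?thesis using a split k by linarith
    qed
  next
    case ik: False
    have iU: "i \<in> {k+1..2*k}" using i ik by simp
    show ?thesis
    proof (cases "s \<le> k")
      case sk: False
      have "s \<in> Fe k i t" if "t \<in> {1..k-1}" for t
      proof -
        have "t < k" using that k by auto
        then show ?thesis using ik s sk by (simp add: Fe_C)
      qed
      then have sub: "{1..k-1} \<subseteq> ?A" by auto
      have a: "k - 1 \<le> card ?A" using card_mono[OF fA sub] by simp
      have v: "(if s = k+1 then 1 else 0) < k" using k by auto
      obtain j where j: "j \<in> {k+1..2*k}" "spe k i j = (if s = k+1 then 1 else 0)"
        using spe_wit_j[OF iU v] by blast
      then have "s \<in> Fe k i j" using memR'[OF iU j(1) k s] sk by simp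
      then have sub2: "{j} \<subseteq> ?B" using j by simp
      have "1 \<le> card ?B" using card_mono[OF fB sub2] by simp
      then show ?thesis using a split k by linarith
    next
      case sk: True
      have "s \<in> Fe k i k" using ik s sk by (simp add: Fe_S)
      then have sub: "{k} \<subseteq> ?A" using k by simp
      have a: "1 \<le> card ?A" using card_mono[OF fA sub] by simp
      have Beq: "?B = {t\<in>{k+1..2*k}. spe k i t \<noteq> (if s = 1 then 1 else 0)}"
        using memR'[OF iU _ k s] sk by auto
      have "card {k+1..2*k} - 1 \<le> card {t\<in>{k+1..2*k}. spe k i t \<noteq> (if s = 1 then 1 else 0)}"
      proof (rule card_ge_minus_one)
        fix x y assume "x \<in> {k+1..2*k}" "y \<in> {k+1..2*k}" "\<not> spe k i x \<noteq> (if s = 1 then 1 else 0)"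
          "\<not> spe k i y \<noteq> (if s = 1 then 1 else 0)"
        then show "x = y" using spe_inj[OF iU, of x y] by auto
      qed simp
      then have "k - 1 \<le> card ?B" using Beq by simp
      then show ?thesis using a split k by linarith
    qed
  qed
qed

lemma Fe_col_ge:
  assumes k: "3 \<le> k" and j: "j \<in> {1..2*k}" and s: "s \<in> {1..2*k}"
  shows "k \<le> card {t\<in>{1..2*k}. s \<in> Fe k t j}"
proof -
  let ?A = "{t\<in>{1..k}. s \<in> Fe k t j}" and ?B = "{t\<in>{k+1..2*k}. s \<in> Fe k t j}"
  have split: "card {t\<in>{1..2*k}. s \<in> Fe k t j} = card ?A + card ?B"
    by (rule card_split) simp
  have fB: "finite ?B" and fA: "finite ?A" by auto
  consider "j < k" | "j = k" | "k < j" by linarith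
  then show ?thesis
  proof cases
    case 1
    show ?thesis
    proof (cases "s \<le> k")
      case True
      then have "?A = {1..k}" using 1 s by (auto simp: Fe_C)
      then show ?thesis using split by simp
    next
      case False
      then have "?B = {k+1..2*k}" using 1 s by (auto simp: Fe_C)
      then show ?thesis using split by simp
    qed
  next
    case 2
    show ?thesis
    proof (cases "s \<le> k")
      case True
      then have "?B = {k+1..2*k}" using 2 s by (auto simp: Fe_S)
      then show ?thesis using split by simp
    next
      case False
      then have "?A = {1..k}" using 2 s by (auto simp: Fe_S)
      then show ?thesis using split by simp
    qed
  next
    case 3
    have jU: "j \<in> {k+1..2*k}" using j 3 by simp
    show ?thesis
    proof (cases "s \<le> k")
      case sk: True
      have v: "s - 1 < k" using s sk by auto
      obtain i where i: "i \<in> {1..k}" "sme k i j = s - 1" using sme_wit_i[OF jU v] by blast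
      then have "s \<in> Fe k i j" using memR[OF i(1) jU, of s] s sk by simp
      then have sub: "{i} \<subseteq> ?A" using i by simp
      have a: "1 \<le> card ?A" using card_mono[OF fA sub] by simp
      have Beq: "?B = {t\<in>{k+1..2*k}. spe k t j \<noteq> (if s = 1 then 1 else 0)}"
        using memR'[OF _ jU k s] sk by auto
      have "card {k+1..2*k} - 1 \<le> card {t\<in>{k+1..2*k}. spe k t j \<noteq> (if s = 1 then 1 else 0)}"
      proof (rule card_ge_minus_one)
        fix x y assume "x \<in> {k+1..2*k}" "y \<in> {k+1..2*k}" "\<not> spe k x j \<noteq> (if s = 1 then 1 else 0)"
          "\<not> spe k y j \<noteq> (if s = 1 then 1 else 0)"
        then show "x = y" using spe_inj[OF jU, of x y] by (auto simp: spe_sym[of k _ j])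
      qed simp
      then have "k - 1 \<le> card ?B" using Beq by simp
      then show ?thesis using a split k by linarith
    next
      case sk: False
      have Aeq: "?A = {t\<in>{1..k}. s \<noteq> k+1+sme k t j}"
        using memR[OF _ jU, of _ s] s sk by auto
      have "card {1..k} - 1 \<le> card {t\<in>{1..k}. s \<noteq> k+1+sme k t j}"
      proof (rule card_ge_minus_one)
        fix x y assume "x \<in> {1..k}" "y \<in> {1..k}" "\<not> s \<noteq> k+1+sme k x j" "\<not> s \<noteq> k+1+sme k y j"
        then show "x = y" using sme_inj_i[OF jU, of x y] by auto
      qed simp
      then have a: "k - 1 \<le> card ?A" using Aeq by simp
      have v: "(if s = k+1 then 1 else 0) < k" using k by auto
      obtain i where i: "i \<in> {k+1..2*k}" "spe k j i = (if s = k+1 then 1 else 0)"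
        using spe_wit_j[OF jU v] by blast
      then have "s \<in> Fe k i j" using memR'[OF i(1) jU k s] sk by (simp add: spe_sym[of k i j])
      then have sub2: "{i} \<subseteq> ?B" using i by simp
      have "1 \<le> card ?B" using card_mono[OF fB sub2] by simp
      then show ?thesis using a split k by linarith
    qed
  qed
qed

definition ae :: "nat \<Rightarrow> nat \<Rightarrow> nat \<Rightarrow> int" where
  "ae k i s = (if i \<le> k \<and> s \<le> k then int s - int i
     else if k < i \<and> k < s then int i - int k - 1 - (if s = k+1 then 1 else 0) else 0)"
definition be :: "nat \<Rightarrow> nat \<Rightarrow> nat \<Rightarrow> int" where
  "be k j s = (if k < j \<and> s \<le> k then - (int j - int k - 1)
     else if j < k then (if s \<le> k then - (int s - 1) else (if s = k+1 then 1 else 0)) else 0)"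
definition ce :: "nat \<Rightarrow> nat \<Rightarrow> nat \<Rightarrow> int" where
  "ce k i j = (if k < i \<and> k < j then int j - int k - 1
     else if j < k then (if i \<le> k then int i - 1 else - (int i - int k - 1)) else 0)"

lemma Fe_dvd:
  assumes k: "3 \<le> k" and i: "i \<in> {1..2*k}" and j: "j \<in> {1..2*k}" and s: "s \<in> Fe k i j"
  shows "int k dvd (ae k i s + be k j s + ce k i j)"
proof -
  consider "j < k" | "j = k" | "k < j \<and> i \<le> k" | "k < j \<and> k < i" by linarith
  then show ?thesis
  proof cases
    case 1
    show ?thesis
    proof (cases "i \<le> k")
      case True
      then have "s \<le> k" using s 1 by (simp add: Fe_C)
      then show ?thesis using True 1 by (simp add: ae_def be_def ce_def)
    next
      case False
      then have "k < s" using s 1 by (simp add: Fe_C)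
      then show ?thesis using False 1 by (simp add: ae_def be_def ce_def)
    qed
  next
    case 2
    show ?thesis
    proof (cases "i \<le> k")
      case True
      then have "k < s" using s 2 by (simp add: Fe_S)
      then show ?thesis using True 2 by (simp add: ae_def be_def ce_def)
    next
      case False
      then have "s \<le> k" using s 2 by (simp add: Fe_S)
      then show ?thesis using False 2 by (simp add: ae_def be_def ce_def)
    qed
  next
    case 3
    have iL: "i \<in> {1..k}" and jU: "j \<in> {k+1..2*k}" using i j 3 by auto
    show ?thesis
    proof (cases "s \<le> k")
      case True
      then have ss: "s = sme k i j + 1" using memR[OF iL jU, of s] s by simp
      have W: "ae k i s + be k j s + ce k i j = int s - int i - (int j - int k - 1)"
        using 3 True by (simp add: ae_def be_def ce_def)
      show ?thesis
      proof (cases "i + j < 2*k+2")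
        case True
        then have "int s - int i - (int j - int k - 1) = 0" using ss 3 iL jU by (simp add: sme_def)
        then show ?thesis using W by simp
      next
        case False
        then have "int s - int i - (int j - int k - 1) = - int k" using ss 3 iL jU by (simp add: sme_def)
        then have "ae k i s + be k j s + ce k i j = - int k" using W by linarith
        then show ?thesis by simp
      qed
    next
      case False
      then show ?thesis using 3 by (simp add: ae_def be_def ce_def)
    qed
  next
    case 4
    have iU: "i \<in> {k+1..2*k}" and jU: "j \<in> {k+1..2*k}" using i j 4 by auto
    have sr: "s \<in> {1..2*k}" using Fe_cell[OF k i j] s by auto
    show ?thesis
    proof (cases "s \<le> k")
      case True
      then show ?thesis using 4 by (simp add: ae_def be_def ce_def)
    next
      case False
      then have sp: "spe k i j = (if s = k+1 then 1 else 0)" using memR'[OF iU jU k sr] s by simp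
      have W: "ae k i s + be k j s + ce k i j = int i + int j - 2 * int k - 2 - (if s = k+1 then 1 else 0)"
        using 4 False by (simp add: ae_def be_def ce_def)
      show ?thesis
      proof (cases "i + j < 3*k+2")
        case True
        then have "int i + int j - 2 * int k - 2 - (if s = k+1 then 1 else 0) = 0"
          using sp iU jU by (simp add: spe_def split: if_splits)
        then show ?thesis using W by simp
      next
        case False
        then have "int i + int j - 2 * int k - 2 - (if s = k+1 then 1 else 0) = int k"
          using sp iU jU by (simp add: spe_def split: if_splits)
        then have "ae k i s + be k j s + ce k i j = int k" using W by linarith
        then show ?thesis by simp
      qed
    qed
  qed
qed

lemma sum_split2: "m \<le> n \<Longrightarrow> (\<Sum>s\<in>{1..n}. f s) = (\<Sum>s\<in>{1..m}. f s) + (\<Sum>s\<in>{m+1..n::nat}. f s)"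
proof -
  assume mn: "m \<le> n"
  have "{1..n} = {1..m} \<union> {m+1..n}" using mn by auto
  then show ?thesis by (simp add: sum.union_disjoint disjoint_iff)
qed

lemma sum_lt: "1 \<le> k \<Longrightarrow> (\<Sum>j\<in>{1..k}. if j < k then f j else 0) = (\<Sum>j\<in>{1..k-1::nat}. f j)"
proof -
  assume k: "1 \<le> k"
  have "(\<Sum>j\<in>{1..k}. if j < k then f j else 0) = (\<Sum>j\<in>{1..k}. if j \<le> k - 1 then f j else 0)"
    by (rule sum.cong) auto
  also have "\<dots> = (\<Sum>j\<in>{1..k-1}. f j)" by (rule sum_lo) simp
  finally show ?thesis .
qed

lemma gauss_G: "2 * (\<Sum>i\<in>{k+1..k+m}. (int i - int k - 1)) = int m * (int m - 1)"
proof (induction m)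
  case 0 then show ?case by simp
next
  case (Suc m)
  have "{k+1..k + Suc m} = insert (k + Suc m) {k+1..k+m}" by auto
  then have "(\<Sum>i\<in>{k+1..k+Suc m}. (int i - int k - 1)) = (\<Sum>i\<in>{k+1..k+m}. (int i - int k - 1)) + int m"
    by simp
  then show ?case using Suc.IH by (simp add: algebra_simps)
qed

lemma Fe_sum:
  assumes k: "3 \<le> k"
  shows "(\<Sum>i\<in>{1..2*k}. \<Sum>x\<in>{1..2*k}. ae k i x) + (\<Sum>j\<in>{1..2*k}. \<Sum>x\<in>{1..2*k}. be k j x)
       + (\<Sum>i\<in>{1..2*k}. \<Sum>j\<in>{1..2*k}. ce k i j) = (\<Sum>i\<in>{k+1..2*k}. (int i - int k - 1)) - 1"
proof -
  define G where "G = (\<Sum>i\<in>{k+1..2*k}. (int i - int k - 1))"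
  define P where "P = (\<Sum>s\<in>{1..k}. int s)"
  have kk: "k \<le> 2*k" by simp
  have ck1: "int (k - 1) = int k - 1" using k by simp
  have a1: "(\<Sum>s\<in>{1..2*k}. ae k i s) = (if i \<le> k then P - int k * int i else int k * (int i - int k - 1) - 1)" for i
  proof (cases "i \<le> k")
    case True
    have "(\<Sum>s\<in>{1..k}. ae k i s) = (\<Sum>s\<in>{1..k}. int s - int i)"
      by (rule sum.cong) (use True in \<open>auto simp: ae_def\<close>)
    also have "\<dots> = P - int k * int i" by (simp add: sum_subtractf P_def)
    finally have x: "(\<Sum>s\<in>{1..k}. ae k i s) = P - int k * int i" .
    have y: "(\<Sum>s\<in>{k+1..2*k}. ae k i s) = 0"
      by (rule sum.neutral) (use True in \<open>auto simp: ae_def\<close>)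
    show ?thesis using x y True sum_split2[OF kk, of "ae k i"] by (simp add: algebra_simps)
  next
    case False
    have x: "(\<Sum>s\<in>{1..k}. ae k i s) = 0"
      by (rule sum.neutral) (use False in \<open>auto simp: ae_def\<close>)
    have "(\<Sum>s\<in>{k+1..2*k}. ae k i s) = (\<Sum>s\<in>{k+1..2*k}. (int i - int k - 1) - (if s = k+1 then 1 else 0))"
      by (rule sum.cong) (use False in \<open>auto simp: ae_def\<close>)
    also have "\<dots> = int k * (int i - int k - 1) - 1"
      using k by (simp add: sum_subtractf sum.delta)
    finally have y: "(\<Sum>s\<in>{k+1..2*k}. ae k i s) = int k * (int i - int k - 1) - 1" .
    show ?thesis using x y False sum_split2[OF kk, of "ae k i"] by (simp add: algebra_simps)
  qed
  have A: "(\<Sum>i\<in>{1..2*k}. \<Sum>x\<in>{1..2*k}. ae k i x) = int k * G - int k"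
  proof -
    have "(\<Sum>i\<in>{1..2*k}. \<Sum>x\<in>{1..2*k}. ae k i x)
        = (\<Sum>i\<in>{1..k}. \<Sum>x\<in>{1..2*k}. ae k i x) + (\<Sum>i\<in>{k+1..2*k}. \<Sum>x\<in>{1..2*k}. ae k i x)"
      by (rule sum_split2[OF kk])
    also have "(\<Sum>i\<in>{1..k}. \<Sum>x\<in>{1..2*k}. ae k i x) = (\<Sum>i\<in>{1..k}. P - int k * int i)"
      by (rule sum.cong[OF refl]) (simp only: a1, simp)
    also have "\<dots> = 0" by (simp add: sum_subtractf P_def sum_distrib_left[symmetric])
    also have "(\<Sum>i\<in>{k+1..2*k}. \<Sum>x\<in>{1..2*k}. ae k i x) = (\<Sum>i\<in>{k+1..2*k}. int k * (int i - int k - 1) - 1)"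
      by (rule sum.cong[OF refl]) (simp only: a1, simp)
    also have "\<dots> = (\<Sum>i\<in>{k+1..2*k}. int k * (int i - int k - 1)) - (\<Sum>i\<in>{k+1..2*k}. 1)"
      by (rule sum_subtractf)
    also have "(\<Sum>i\<in>{k+1..2*k}. int k * (int i - int k - 1)) = int k * G"
      by (simp only: G_def sum_distrib_left)
    also have "(\<Sum>i\<in>{k+1..2*k}. (1::int)) = int k" by simp
    finally show ?thesis by simp
  qed
  have b1: "(\<Sum>s\<in>{1..2*k}. be k j s) = (if k < j then - int k * (int j - int k - 1)
      else if j < k then int k + 1 - P else 0)" for j
  proof -
    consider "k < j" | "j < k" | "j = k" by linarith
    then show ?thesis
    proof cases
      case 1
      have x: "(\<Sum>s\<in>{1..k}. be k j s) = (\<Sum>s\<in>{1..k}. - (int j - int k - 1))"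
        by (rule sum.cong) (use 1 in \<open>auto simp: be_def\<close>)
      have y: "(\<Sum>s\<in>{k+1..2*k}. be k j s) = 0"
        by (rule sum.neutral) (use 1 in \<open>auto simp: be_def\<close>)
      show ?thesis using x y 1 sum_split2[OF kk, of "be k j"] by (simp add: algebra_simps)
    next
      case 2
      have "(\<Sum>s\<in>{1..k}. be k j s) = (\<Sum>s\<in>{1..k}. - (int s - 1))"
        by (rule sum.cong) (use 2 in \<open>auto simp: be_def\<close>)
      also have "\<dots> = int k - P" by (simp add: sum_subtractf P_def sum_negf)
      finally have x: "(\<Sum>s\<in>{1..k}. be k j s) = int k - P" .
      have "(\<Sum>s\<in>{k+1..2*k}. be k j s) = (\<Sum>s\<in>{k+1..2*k}. if s = k+1 then 1 else 0)"
        by (rule sum.cong) (use 2 in \<open>auto simp: be_def\<close>)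
      also have "\<dots> = 1" using k by (simp add: sum.delta)
      finally have y: "(\<Sum>s\<in>{k+1..2*k}. be k j s) = 1" .
      show ?thesis using x y 2 sum_split2[OF kk, of "be k j"] by (simp add: algebra_simps)
    next
      case 3
      have "(\<Sum>s\<in>{1..2*k}. be k j s) = 0" by (rule sum.neutral) (use 3 in \<open>auto simp: be_def\<close>)
      then show ?thesis using 3 by simp
    qed
  qed
  have B: "(\<Sum>j\<in>{1..2*k}. \<Sum>x\<in>{1..2*k}. be k j x) = - int k * G + (int k - 1) * (int k + 1 - P)"
  proof -
    have "(\<Sum>j\<in>{1..2*k}. \<Sum>x\<in>{1..2*k}. be k j x)
        = (\<Sum>j\<in>{1..k}. \<Sum>x\<in>{1..2*k}. be k j x) + (\<Sum>j\<in>{k+1..2*k}. \<Sum>x\<in>{1..2*k}. be k j x)"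
      by (rule sum_split2[OF kk])
    also have "(\<Sum>j\<in>{1..k}. \<Sum>x\<in>{1..2*k}. be k j x) = (\<Sum>j\<in>{1..k}. if j < k then int k + 1 - P else 0)"
      by (rule sum.cong[OF refl]) (simp only: b1, simp)
    also have "\<dots> = (\<Sum>j\<in>{1..k-1}. int k + 1 - P)" using k by (intro sum_lt) simp
    also have "\<dots> = (int k - 1) * (int k + 1 - P)" using ck1 by simp
    also have "(\<Sum>j\<in>{k+1..2*k}. \<Sum>x\<in>{1..2*k}. be k j x) = (\<Sum>j\<in>{k+1..2*k}. - int k * (int j - int k - 1))"
      by (rule sum.cong[OF refl]) (simp only: b1, simp)
    also have "\<dots> = - int k * G" by (simp only: G_def sum_distrib_left)
    finally show ?thesis by simp
  qed
  have c1: "(\<Sum>j\<in>{1..2*k}. ce k i j) = (if k < i then G - (int k - 1) * (int i - int k - 1)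
      else (int k - 1) * (int i - 1))" for i
  proof (cases "k < i")
    case True
    have "(\<Sum>j\<in>{1..k}. ce k i j) = (\<Sum>j\<in>{1..k}. if j < k then - (int i - int k - 1) else 0)"
      by (rule sum.cong) (use True in \<open>auto simp: ce_def\<close>)
    also have "\<dots> = (\<Sum>j\<in>{1..k-1}. - (int i - int k - 1))" using k by (intro sum_lt) simp
    also have "\<dots> = - (int k - 1) * (int i - int k - 1)" using ck1 by (simp add: algebra_simps)
    finally have x: "(\<Sum>j\<in>{1..k}. ce k i j) = - (int k - 1) * (int i - int k - 1)" .
    have y: "(\<Sum>j\<in>{k+1..2*k}. ce k i j) = G"
      unfolding G_def by (rule sum.cong) (use True in \<open>auto simp: ce_def\<close>)
    show ?thesis using x y True sum_split2[OF kk, of "ce k i"] by (simp add: algebra_simps)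
  next
    case False
    have "(\<Sum>j\<in>{1..k}. ce k i j) = (\<Sum>j\<in>{1..k}. if j < k then int i - 1 else 0)"
      by (rule sum.cong) (use False in \<open>auto simp: ce_def\<close>)
    also have "\<dots> = (\<Sum>j\<in>{1..k-1}. int i - 1)" using k by (intro sum_lt) simp
    also have "\<dots> = (int k - 1) * (int i - 1)" using ck1 by simp
    finally have x: "(\<Sum>j\<in>{1..k}. ce k i j) = (int k - 1) * (int i - 1)" .
    have y: "(\<Sum>j\<in>{k+1..2*k}. ce k i j) = 0"
      by (rule sum.neutral) (use False in \<open>auto simp: ce_def\<close>)
    show ?thesis using x y False sum_split2[OF kk, of "ce k i"] by (simp add: algebra_simps)
  qed
  have C: "(\<Sum>i\<in>{1..2*k}. \<Sum>j\<in>{1..2*k}. ce k i j) = (int k - 1) * (P - int k) + int k * G - (int k - 1) * G"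
  proof -
    have "(\<Sum>i\<in>{1..2*k}. \<Sum>j\<in>{1..2*k}. ce k i j)
        = (\<Sum>i\<in>{1..k}. \<Sum>j\<in>{1..2*k}. ce k i j) + (\<Sum>i\<in>{k+1..2*k}. \<Sum>j\<in>{1..2*k}. ce k i j)"
      by (rule sum_split2[OF kk])
    also have "(\<Sum>i\<in>{1..k}. \<Sum>j\<in>{1..2*k}. ce k i j) = (\<Sum>i\<in>{1..k}. (int k - 1) * (int i - 1))"
      by (rule sum.cong[OF refl]) (simp only: c1, simp)
    also have "\<dots> = (int k - 1) * (P - int k)" by (simp add: sum_distrib_left[symmetric] sum_subtractf P_def)
    also have "(\<Sum>i\<in>{k+1..2*k}. \<Sum>j\<in>{1..2*k}. ce k i j) = (\<Sum>i\<in>{k+1..2*k}. G - (int k - 1) * (int i - int k - 1))"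
      by (rule sum.cong[OF refl]) (simp only: c1, simp)
    also have "\<dots> = (\<Sum>i\<in>{k+1..2*k}. G) - (\<Sum>i\<in>{k+1..2*k}. (int k - 1) * (int i - int k - 1))"
      by (rule sum_subtractf)
    also have "(\<Sum>i\<in>{k+1..2*k}. (int k - 1) * (int i - int k - 1)) = (int k - 1) * G"
      by (simp only: G_def sum_distrib_left)
    also have "(\<Sum>i\<in>{k+1..2*k}. G) = int k * G" by simp
    finally show ?thesis by simp
  qed
  show ?thesis using A B C unfolding G_def[symmetric] by (simp add: algebra_simps)
qed

lemma even_nd:
  assumes k: "3 \<le> k"
  shows "\<not> int k dvd ((\<Sum>i\<in>{k+1..2*k}. (int i - int k - 1)) - 1)"
proof
  define G where "G = (\<Sum>i\<in>{k+1..2*k}. (int i - int k - 1))"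
  assume "int k dvd ((\<Sum>i\<in>{k+1..2*k}. (int i - int k - 1)) - 1)"
  then have h: "int k dvd (G - 1)" unfolding G_def .
  have r: "{k+1..2*k} = {k+1..k+k}" by auto
  have "2 * G = int k * (int k - 1)" unfolding G_def r by (rule gauss_G)
  then have e: "2 * (G - 1) = int k * (int k - 1) - 2" by (simp add: algebra_simps)
  have "int k dvd 2 * (G - 1)" by (rule dvd_mult[OF h])
  then have h2: "int k dvd (int k * (int k - 1) - 2)" unfolding e .
  have "int k dvd (int k * (int k - 1) - (int k * (int k - 1) - 2))"
    by (rule dvd_diff[OF _ h2]) simp
  then have "int k dvd 2" by simp
  then have "int k \<le> 2" by (rule zdvd_imp_le) simp
  then show False using k by simp
qed

lemma even_case:
  assumes k: "3 \<le> k"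
  shows "\<exists>A. is_array (2*k) 2 k A \<and> \<not> layerable (2*k) 2 k A"
proof (intro exI conjI)
  let ?A = "\<lambda>c. Fe k (c!0) (c!1)"
  show "is_array (2*k) 2 k ?A"
  proof (rule array_of)
    fix i j assume "i \<in> {1..2*k}" "j \<in> {1..2*k}"
    then show "Fe k i j \<subseteq> {1..2*k} \<and> card (Fe k i j) = k" using Fe_cell k by blast
  next
    fix i x assume i: "i \<in> {1..2*k}" and x: "x \<in> {1..2*k}"
    show "card {t\<in>{1..2*k}. x \<in> Fe k i t} = k"
      by (rule count_exact[OF _ _ x]) (use Fe_cell[OF k i] Fe_row_ge[OF k i] in auto)
  next
    fix j x assume j: "j \<in> {1..2*k}" and x: "x \<in> {1..2*k}"
    show "card {t\<in>{1..2*k}. x \<in> Fe k t j} = k"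
      by (rule count_exact[OF _ _ x]) (use Fe_cell[OF k _ j] Fe_col_ge[OF k j] in auto)
  qed
  have sub: "\<forall>c\<in>cells (2*k) 2. ?A c \<subseteq> {1..2*k}"
  proof
    fix c assume "c \<in> cells (2*k) 2"
    then obtain i j where "c = [i,j]" "i \<in> {1..2*k}" "j \<in> {1..2*k}" by (auto simp: cells2)
    then show "?A c \<subseteq> {1..2*k}" using Fe_cell[OF k, of i j] by simp
  qed
  have "\<not> is_layer (2*k) 2 ?A L" for L
  proof (rule no_layer[OF sub, where a = "ae k" and b = "be k" and c = "ce k" and k = "int k"])
    fix i j x assume "i \<in> {1..2*k}" "j \<in> {1..2*k}" "x \<in> ?A [i,j]"
    then show "int k dvd (ae k i x + be k j x + ce k i j)" using Fe_dvd[OF k] by simp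
  next
    show "\<not> int k dvd ((\<Sum>i\<in>{1..2*k}. \<Sum>x\<in>{1..2*k}. ae k i x) + (\<Sum>j\<in>{1..2*k}. \<Sum>x\<in>{1..2*k}. be k j x)
       + (\<Sum>i\<in>{1..2*k}. \<Sum>j\<in>{1..2*k}. ce k i j))" using Fe_sum[OF k] even_nd[OF k] by simp
  qed
  then show "\<not> layerable (2*k) 2 k ?A" using k by (intro not_layerable) auto
qed

theorem theorem8:
  fixes n :: nat
  assumes "n \<ge> 5"
  shows "\<exists>A. is_array n 2 (n div 2) A \<and> \<not> layerable n 2 (n div 2) A"
proof (cases "even n")
  case True
  then obtain k where n: "n = 2*k" by (auto elim: evenE)
  then have "3 \<le> k" using assms by simp
  then show ?thesis using even_case[of k] n by simp
next
  case False
  then obtain k where n: "n = 2*k+1" by (auto elim: oddE)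
  then have "2 \<le> k" using assms by simp
  then show ?thesis using odd_case[of k] n by simp
qed

end
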